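(* Let $k$ be a field of characteristic $0$, $n\geq3$, and let $\phi$ be a quadratic form over $k$ in $n-1$ variables such that $\psi=\langle1\rangle\perp(-\phi)$ is a regular anisotropic form. Let $Q^\psi\subset\mathbb A^n_k$ be the hypersurface $x_1^2-\phi(x_2,\dots,x_n)-1=0$. Let $(R,m,\kappa)$ be a discrete valuation ring containing $k$, with fraction field $K$ and valuation $v$. Let $f\in Q^\psi(K)$ with $f_i=f^*(x_i)$, and suppose $\phi_\kappa$ is anisotropic. (1) If $f$ lifts to $Q^\psi({\rm Spec}\,R)$, then both $v(f_1-1)$ and $v(f_1+1)$ are even. (2) If $f$ does not lift to $Q^\psi({\rm Spec}\,R)$, then $v(f_1)<0$ and $v(f_1)=\min\{v(f_2),\dots,v(f_n)\}$.
   Context: $\phi_\kappa$ is the base change of $\phi$ to the residue field $\kappa$; $\langle1\rangle$ is the form $x^2$ and $\perp$ the orthogonal sum. *)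

theory Defs
  imports Main
begin

text \<open>Vectors are functions nat => 'a, only the first m coordinates matter.\<close>

definition qf_eval :: "nat \<Rightarrow> (nat \<Rightarrow> nat \<Rightarrow> 'a::comm_ring_1) \<Rightarrow> (nat \<Rightarrow> 'a) \<Rightarrow> 'a" where
  "qf_eval m A x = (\<Sum>i<m. \<Sum>j<m. A i j * x i * x j)"

definition qf_polar :: "nat \<Rightarrow> (nat \<Rightarrow> nat \<Rightarrow> 'a::comm_ring_1) \<Rightarrow> (nat \<Rightarrow> 'a) \<Rightarrow> (nat \<Rightarrow> 'a) \<Rightarrow> 'a" where
  "qf_polar m A x y = qf_eval m A (\<lambda>i. x i + y i) - qf_eval m A x - qf_eval m A y"

definition qf_regular :: "nat \<Rightarrow> (nat \<Rightarrow> nat \<Rightarrow> 'a::comm_ring_1) \<Rightarrow> bool" where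
  "qf_regular m A \<longleftrightarrow>
     (\<forall>x. (\<forall>y. qf_polar m A x y = 0) \<longrightarrow> (\<forall>i<m. x i = 0))"

definition qf_anisotropic :: "nat \<Rightarrow> (nat \<Rightarrow> nat \<Rightarrow> 'a::comm_ring_1) \<Rightarrow> bool" where
  "qf_anisotropic m A \<longleftrightarrow> (\<forall>x. qf_eval m A x = 0 \<longrightarrow> (\<forall>i<m. x i = 0))"

definition qf_one :: "nat \<Rightarrow> nat \<Rightarrow> 'a::comm_ring_1" where
  "qf_one i j = (if i = 0 \<and> j = 0 then 1 else 0)"

definition qf_neg :: "(nat \<Rightarrow> nat \<Rightarrow> 'a::comm_ring_1) \<Rightarrow> nat \<Rightarrow> nat \<Rightarrow> 'a" where
  "qf_neg A i j = - A i j"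

definition qf_orth_sum :: "nat \<Rightarrow> (nat \<Rightarrow> nat \<Rightarrow> 'a::comm_ring_1) \<Rightarrow> (nat \<Rightarrow> nat \<Rightarrow> 'a) \<Rightarrow> nat \<Rightarrow> nat \<Rightarrow> 'a" where
  "qf_orth_sum m1 A B i j =
     (if i < m1 \<and> j < m1 then A i j
      else if m1 \<le> i \<and> m1 \<le> j then B (i - m1) (j - m1) else 0)"

definition qf_map :: "('a \<Rightarrow> 'b) \<Rightarrow> (nat \<Rightarrow> nat \<Rightarrow> 'a) \<Rightarrow> nat \<Rightarrow> nat \<Rightarrow> 'b" where
  "qf_map h A i j = h (A i j)"

definition ring_hom_fun :: "('a::comm_ring_1 \<Rightarrow> 'b::comm_ring_1) \<Rightarrow> bool" where
  "ring_hom_fun h \<longleftrightarrow> h 1 = 1 \<and> (\<forall>a b. h (a + b) = h a + h b) \<and> (\<forall>a b. h (a * b) = h a * h b)"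

text \<open>A normalized discrete valuation on the field K, given by its values on nonzero
  elements (v 0 = infinity is not represented; v is only consulted on nonzero elements).
  The associated DVR is R = {0} \<union> {x. v x \<ge> 0}, with maximal ideal m = {0} \<union> {x. v x > 0},
  and K is its fraction field.\<close>
definition discrete_valuation :: "('K::field \<Rightarrow> int) \<Rightarrow> bool" where
  "discrete_valuation v \<longleftrightarrow>
     (\<forall>x y. x \<noteq> 0 \<longrightarrow> y \<noteq> 0 \<longrightarrow> v (x * y) = v x + v y) \<and>
     (\<forall>x y. x \<noteq> 0 \<longrightarrow> y \<noteq> 0 \<longrightarrow> x + y \<noteq> 0 \<longrightarrow> v (x + y) \<ge> min (v x) (v y)) \<and>
     (\<exists>p. p \<noteq> 0 \<and> v p = 1)"

definition val_ring :: "('K::field \<Rightarrow> int) \<Rightarrow> 'K set" where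
  "val_ring v = {x. x = 0 \<or> v x \<ge> 0}"

definition val_ideal :: "('K::field \<Rightarrow> int) \<Rightarrow> 'K set" where
  "val_ideal v = {x. x = 0 \<or> v x > 0}"

text \<open>phi_kappa anisotropic, where kappa = R/m: a vector with coordinates in R on which
  phi takes a value in m reduces to the zero vector mod m.\<close>
definition residue_anisotropic :: "('K::field \<Rightarrow> int) \<Rightarrow> nat \<Rightarrow> (nat \<Rightarrow> nat \<Rightarrow> 'K) \<Rightarrow> bool" where
  "residue_anisotropic v m A \<longleftrightarrow>
     (\<forall>y. (\<forall>i<m. y i \<in> val_ring v) \<longrightarrow> qf_eval m A y \<in> val_ideal v \<longrightarrow>
          (\<forall>i<m. y i \<in> val_ideal v))"

text \<open>Coordinates x_1..x_n are stored at indices 0..n-1; phi has n-1 variables.\<close>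
definition on_quadric :: "nat \<Rightarrow> (nat \<Rightarrow> nat \<Rightarrow> 'K::comm_ring_1) \<Rightarrow> (nat \<Rightarrow> 'K) \<Rightarrow> bool" where
  "on_quadric n A f \<longleftrightarrow> (f 0)^2 - qf_eval (n - 1) A (\<lambda>i. f (i + 1)) - 1 = 0"

text \<open>A K-point of the affine scheme Q^psi extends to an R-point iff all its coordinates lie in R.\<close>
definition lifts_to_R :: "('K::field \<Rightarrow> int) \<Rightarrow> nat \<Rightarrow> (nat \<Rightarrow> 'K) \<Rightarrow> bool" where
  "lifts_to_R v n f \<longleftrightarrow> (\<forall>i<n. f i \<in> val_ring v)"

end

theory Submission
  imports Defs
begin

context
  fixes v :: "'K::field \<Rightarrow> int"
  assumes dval: "discrete_valuation v"
begin

lemma vmult: "x \<noteq> 0 \<Longrightarrow> y \<noteq> 0 \<Longrightarrow> v (x * y) = v x + v y"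
  using dval unfolding discrete_valuation_def by blast

lemma vadd: "x \<noteq> 0 \<Longrightarrow> y \<noteq> 0 \<Longrightarrow> x + y \<noteq> 0 \<Longrightarrow> v (x + y) \<ge> min (v x) (v y)"
  using dval unfolding discrete_valuation_def by blast

lemma v1: "v 1 = 0"
  using vmult[of 1 1] by simp

lemma vinv: "x \<noteq> 0 \<Longrightarrow> v (inverse x) = - v x"
  using vmult[of x "inverse x"] v1 by simp

lemma vm1: "v (-1) = 0"
  using vmult[of "-1" "-1"] v1 by simp

lemma vneg: "x \<noteq> 0 \<Longrightarrow> v (- x) = v x"
  using vmult[of "-1" x] vm1 by simp

lemma vpow2: "x \<noteq> 0 \<Longrightarrow> v (x^2) = 2 * v x"
  using vmult[of x x] by (simp add: power2_eq_square)

lemma vstrict: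
  assumes "x \<noteq> 0" "y \<noteq> 0" "v x < v y"
  shows "x + y \<noteq> 0 \<and> v (x + y) = v x"
proof -
  have ne: "x + y \<noteq> 0"
  proof
    assume "x + y = 0"
    then have "x = - y" by (simp add: eq_neg_iff_add_eq_0)
    then show False using assms vneg[of y] by simp
  qed
  have a: "v (x + y) \<ge> min (v x) (v y)" using vadd assms ne by blast
  have b: "v ((x + y) + (- y)) \<ge> min (v (x+y)) (v (-y))"
    using vadd[of "x+y" "-y"] assms ne by simp
  then have "v x \<ge> min (v (x+y)) (v y)" using vneg[of y] assms by simp
  then show ?thesis using a ne assms by linarith
qed

lemma R_add: "x \<in> val_ring v \<Longrightarrow> y \<in> val_ring v \<Longrightarrow> x + y \<in> val_ring v"
  unfolding val_ring_def using vadd[of x y] by fastforce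

lemma R_mult: "x \<in> val_ring v \<Longrightarrow> y \<in> val_ring v \<Longrightarrow> x * y \<in> val_ring v"
  unfolding val_ring_def using vmult[of x y] by fastforce

lemma R_sum: "(\<And>i. i \<in> I \<Longrightarrow> F i \<in> val_ring v) \<Longrightarrow> sum F I \<in> val_ring v"
proof (induction I rule: infinite_finite_induct)
  case (infinite A) then show ?case by (simp add: val_ring_def)
next
  case empty then show ?case by (simp add: val_ring_def)
next
  case (insert x F) then show ?case by (simp add: R_add)
qed

lemma qf_R:
  assumes "\<And>i j. B i j \<in> val_ring v" "\<And>i. i < m \<Longrightarrow> y i \<in> val_ring v"
  shows "qf_eval m B y \<in> val_ring v"
  unfolding qf_eval_def using assms by (intro R_sum R_mult) auto

lemma qf_scale: "qf_eval m B (\<lambda>i. c * y i) = c^2 * qf_eval m B y"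
  by (simp add: qf_eval_def sum_distrib_left power2_eq_square mult_ac)

lemma key:
  assumes coef: "\<And>i j. B i j \<in> val_ring v"
    and ra: "residue_anisotropic v m B"
    and nz: "\<exists>i<m. g i \<noteq> 0"
  shows "qf_eval m B g \<noteq> 0 \<and> v (qf_eval m B g) = 2 * Min {v (g i) | i. i < m \<and> g i \<noteq> 0}"
proof -
  let ?S = "{v (g i) | i. i < m \<and> g i \<noteq> 0}"
  have fin: "finite ?S" by simp
  have ne: "?S \<noteq> {}" using nz by auto
  obtain j where j: "j < m" "g j \<noteq> 0" "v (g j) = Min ?S"
    using Min_in[OF fin ne] by auto
  define c where "c = g j"
  define y where "y = (\<lambda>i. g i / c)"
  have c0: "c \<noteq> 0" using j c_def by simp
  have yR: "y i \<in> val_ring v" if "i < m" for i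
  proof (cases "g i = 0")
    case True then show ?thesis by (simp add: y_def val_ring_def)
  next
    case False
    have "v (g i) \<in> ?S" using that False by auto
    then have le: "v c \<le> v (g i)" using j c_def Min_le[OF fin] by auto
    have "v (y i) = v (g i) - v c"
      using vmult[of "g i" "inverse c"] vinv[of c] False c0
      by (simp add: y_def divide_inverse)
    then show ?thesis using le by (simp add: val_ring_def)
  qed
  have yj: "y j \<notin> val_ideal v" using c0 v1 by (simp add: y_def c_def val_ideal_def)
  have qR: "qf_eval m B y \<in> val_ring v" by (rule qf_R) (use coef yR in auto)
  have qI: "qf_eval m B y \<notin> val_ideal v"
    using ra yR yj j(1) unfolding residue_anisotropic_def by blast
  have q0: "qf_eval m B y \<noteq> 0" and qv: "v (qf_eval m B y) = 0"
    using qR qI by (auto simp: val_ring_def val_ideal_def)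
  have gy: "g = (\<lambda>i. c * y i)" using c0 by (auto simp: y_def)
  have eq: "qf_eval m B g = c^2 * qf_eval m B y" using gy qf_scale by metis
  have "v (qf_eval m B g) = 2 * v c"
    using eq vmult[of "c^2" "qf_eval m B y"] vpow2[OF c0] q0 qv c0 by simp
  then show ?thesis using eq q0 c0 j c_def by simp
qed

end

theorem lemma4p11:
  fixes A :: "nat \<Rightarrow> nat \<Rightarrow> 'k::field_char_0"
    and h :: "'k \<Rightarrow> 'K::field"
    and v :: "'K \<Rightarrow> int"
    and n :: nat
    and f :: "nat \<Rightarrow> 'K"
  assumes n3: "n \<ge> 3"
    and psi_regular: "qf_regular n (qf_orth_sum 1 qf_one (qf_neg A))"
    and psi_aniso: "qf_anisotropic n (qf_orth_sum 1 qf_one (qf_neg A))"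
    and hom: "ring_hom_fun h"
    and dval: "discrete_valuation v"
    and k_in_R: "\<forall>c. h c \<in> val_ring v"
    and fQ: "on_quadric n (qf_map h A) f"
    and res_aniso: "residue_anisotropic v (n - 1) (qf_map h A)"
  shows "(lifts_to_R v n f \<longrightarrow>
            (f 0 \<noteq> 1 \<longrightarrow> even (v (f 0 - 1))) \<and> (f 0 \<noteq> -1 \<longrightarrow> even (v (f 0 + 1))))
       \<and> (\<not> lifts_to_R v n f \<longrightarrow>
            f 0 \<noteq> 0 \<and> v (f 0) < 0 \<and> v (f 0) = Min {v (f i) | i. 1 \<le> i \<and> i < n \<and> f i \<noteq> 0})"
proof -
  define B where "B = qf_map h A"
  define g where "g = (\<lambda>i. f (i + 1))"
  define m where "m = n - 1"
  define Q where "Q = qf_eval m B g"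
  have coef: "\<And>i j. B i j \<in> val_ring v" using k_in_R by (simp add: B_def qf_map_def)
  have fQ': "f 0 ^ 2 - 1 = Q" using fQ unfolding on_quadric_def Q_def B_def m_def g_def by (simp add: algebra_simps)
  have Sset: "{v (g i) | i. i < m \<and> g i \<noteq> 0} = {v (f i) | i. 1 \<le> i \<and> i < n \<and> f i \<noteq> 0}"
    unfolding g_def m_def
    apply (rule set_eqI, rule iffI)
     apply (auto)[1]
    apply clarsimp
    subgoal for i by (rule exI[of _ "i - 1"]) auto
    done
  have keyg: "Q \<noteq> 0 \<and> v Q = 2 * Min {v (f i) | i. 1 \<le> i \<and> i < n \<and> f i \<noteq> 0}"
    if "\<exists>i<m. g i \<noteq> 0"
    using key[OF dval coef, where m=m and g=g] res_aniso that Sset by (simp add: Q_def B_def m_def)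
  have Q0: "(\<forall>i<m. g i = 0) \<Longrightarrow> Q = 0"
    by (simp add: Q_def qf_eval_def)
  have h2: "h 2 = 2" using hom unfolding ring_hom_fun_def by (metis one_add_one)
  have h2i: "h (1/2) * 2 = 1"
  proof -
    have hm: "h (1/2) * h 2 = h ((1/2) * 2)" using hom unfolding ring_hom_fun_def by (simp only:)
    have e: "(1/2::'k) * 2 = 1" by simp
    have h1: "h 1 = 1" using hom unfolding ring_hom_fun_def by (simp only:)
    show ?thesis using hm e h1 h2 by (simp only:)
  qed
  have two0: "(2::'K) \<noteq> 0" using h2i by auto
  have v2: "v 2 = 0"
  proof -
    have hn: "h (1/2) \<noteq> 0" using h2i by (metis mult_zero_left zero_neq_one)
    have "v (h (1/2)) \<ge> 0" using k_in_R hn unfolding val_ring_def by blast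
    moreover have "v (h 2) \<ge> 0" proof -
      have "h 2 \<in> val_ring v" using k_in_R by blast
      then show ?thesis using h2 two0 unfolding val_ring_def by simp
    qed
    ultimately have "v (h (1/2)) \<ge> 0" "v 2 \<ge> 0" using h2 by simp_all
    moreover have "v (h (1/2)) + v 2 = 0"
      using vmult[OF dval, of "h (1/2)" 2] h2i v1[OF dval] two0 by fastforce
    ultimately show ?thesis by linarith
  qed
  show ?thesis
  proof (intro conjI)
   show "lifts_to_R v n f \<longrightarrow>
            (f 0 \<noteq> 1 \<longrightarrow> even (v (f 0 - 1))) \<and> (f 0 \<noteq> -1 \<longrightarrow> even (v (f 0 + 1)))"
   proof
    assume L: "lifts_to_R v n f"
    have f0R: "f 0 \<in> val_ring v" using L n3 by (simp add: lifts_to_R_def)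
    have both: "even (v (f 0 - 1)) \<and> even (v (f 0 + 1))"
      if a0: "f 0 \<noteq> 1" and b0: "f 0 \<noteq> -1"
    proof -
      have an: "f 0 - 1 \<noteq> 0" using a0 by simp
      have bn: "f 0 + 1 \<noteq> 0"
      proof
        assume "f 0 + 1 = 0"
        then have "f 0 = - 1" by (simp add: eq_neg_iff_add_eq_0)
        then show False using b0 by simp
      qed
      have prod: "(f 0 - 1) * (f 0 + 1) = Q" using fQ'
        by (simp add: algebra_simps power2_eq_square)
      have Qn: "Q \<noteq> 0" unfolding prod[symmetric] using an bn by (rule no_zero_divisors)
      have ex: "\<exists>i<m. g i \<noteq> 0" using Q0 Qn by blast
      have vQ: "even (v Q)" using keyg[OF ex] by simp
      have sumv: "v (f 0 - 1) + v (f 0 + 1) = v Q"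
        using vmult[OF dval an bn] prod by simp
      have aR: "f 0 - 1 \<in> val_ring v"
        using R_add[OF dval f0R, of "-1"] vm1[OF dval] by (simp add: val_ring_def)
      have bR: "f 0 + 1 \<in> val_ring v"
        using R_add[OF dval f0R, of "1"] v1[OF dval] by (simp add: val_ring_def)
      have "v (f 0 - 1) = 0 \<or> v (f 0 + 1) = 0"
      proof (rule ccontr)
        assume "\<not> ?thesis"
        then have p: "v (f 0 - 1) > 0" "v (f 0 + 1) > 0" using aR bR an bn
          by (auto simp: val_ring_def)
        have "v ((f 0 + 1) + (- (f 0 - 1))) \<ge> min (v (f 0 + 1)) (v (- (f 0 - 1)))"
          using vadd[OF dval bn, of "- (f 0 - 1)"] an two0 by simp
        moreover have "(f 0 + 1) + (- (f 0 - 1)) = 2" by simp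
        ultimately show False using p v2 vneg[OF dval an] by simp
      qed
      then show ?thesis
      proof
        assume z: "v (f 0 - 1) = 0"
        then have "v (f 0 + 1) = v Q" using sumv by simp
        then show ?thesis using z vQ by simp
      next
        assume z: "v (f 0 + 1) = 0"
        then have "v (f 0 - 1) = v Q" using sumv by simp
        then show ?thesis using z vQ by simp
      qed
    qed
    show "(f 0 \<noteq> 1 \<longrightarrow> even (v (f 0 - 1))) \<and> (f 0 \<noteq> -1 \<longrightarrow> even (v (f 0 + 1)))"
    proof (intro conjI impI)
      assume a0: "f 0 \<noteq> 1"
      show "even (v (f 0 - 1))"
      proof (cases "f 0 = -1")
        case True
        then have e: "f 0 - 1 = - 2" by simp
        show ?thesis unfolding e using vneg[OF dval two0] v2 by simp
      next
        case False then show ?thesis using both a0 by blast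
      qed
    next
      assume b0: "f 0 \<noteq> -1"
      show "even (v (f 0 + 1))"
      proof (cases "f 0 = 1")
        case True
        then have e: "f 0 + 1 = 2" by simp
        show ?thesis unfolding e using v2 by simp
      next
        case False then show ?thesis using both b0 by blast
      qed
    qed
   qed
  next
   show "\<not> lifts_to_R v n f \<longrightarrow>
            f 0 \<noteq> 0 \<and> v (f 0) < 0 \<and> v (f 0) = Min {v (f i) | i. 1 \<le> i \<and> i < n \<and> f i \<noteq> 0}"
   proof
    assume NL: "\<not> lifts_to_R v n f"
    then obtain i where i: "i < n" "f i \<noteq> 0" "v (f i) < 0"
      by (auto simp: lifts_to_R_def val_ring_def)
    have ex: "\<exists>i<m. g i \<noteq> 0"
    proof (rule ccontr)
      assume "\<not> ?thesis"
      then have "Q = 0" using Q0 by blast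
      then have "f 0 ^ 2 = 1" using fQ' by simp
      then have "f 0 = 1 \<or> f 0 = -1" by (simp add: power2_eq_1_iff)
      then have "v (f 0) = 0" using v1[OF dval] vm1[OF dval] by auto
      moreover have "f j = 0" if "1 \<le> j" "j < n" for j
      proof -
        have "j - 1 < m" using that unfolding m_def by simp
        then have "g (j - 1) = 0" using \<open>\<not> (\<exists>i<m. g i \<noteq> 0)\<close> by blast
        then show ?thesis using that unfolding g_def by simp
      qed
      ultimately show False
      proof (cases "i = 0")
        case True then show False using i \<open>v (f 0) = 0\<close> by simp
      next
        case False then have "f i = 0" using i \<open>\<And>j. 1 \<le> j \<Longrightarrow> j < n \<Longrightarrow> f j = 0\<close> by simp
        then show False using i by simp
      qed
    qed
    have K: "Q \<noteq> 0" "v Q = 2 * Min {v (f i) | i. 1 \<le> i \<and> i < n \<and> f i \<noteq> 0}"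
      using keyg[OF ex] by auto
    have f0n: "f 0 \<notin> val_ring v"
    proof
      assume f0R: "f 0 \<in> val_ring v"
      have "Q \<in> val_ring v" using fQ'[symmetric] R_add[OF dval R_mult[OF dval f0R f0R], of "-1"]
        vm1[OF dval] by (simp add: val_ring_def power2_eq_square)
      then have "v Q \<ge> 0" using K by (simp add: val_ring_def)
      moreover have "i \<noteq> 0"
      proof
        assume "i = 0"
        then show False using f0R i unfolding val_ring_def by simp
      qed
      then have "v (f i) \<in> {v (f i) | i. 1 \<le> i \<and> i < n \<and> f i \<noteq> 0}" using i by auto
      then have "Min {v (f i) | i. 1 \<le> i \<and> i < n \<and> f i \<noteq> 0} < 0"
        using i Min_le[of "{v (f i) | i. 1 \<le> i \<and> i < n \<and> f i \<noteq> 0}"] by fastforce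
      ultimately show False using K by simp
    qed
    then have f00: "f 0 \<noteq> 0" and f0v: "v (f 0) < 0" by (auto simp: val_ring_def)
    have "v (f 0 ^ 2 + (-1)) = v (f 0 ^ 2)"
      using vstrict[OF dval, of "f 0 ^ 2" "-1"] vpow2[OF dval f00] vm1[OF dval] f00 f0v by simp
    then have "v Q = 2 * v (f 0)" using fQ' vpow2[OF dval f00] by simp
    then show "f 0 \<noteq> 0 \<and> v (f 0) < 0 \<and> v (f 0) = Min {v (f i) | i. 1 \<le> i \<and> i < n \<and> f i \<noteq> 0}"
      using K f00 f0v by auto
   qed
  qed
qed

end
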